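(* For every $m\ge1$, the cardinality sensitivity of affine maximizers for $2$ players and $m$ items is $\mu_c(2,m)=1$.
   Context: Players $[n]$, items $[m]$, allocations $\Omega=\{A\in\{0,1\}^{n\times m}:\sum_iA_{i,j}=1\ \forall j\}$; $A_i\in\{0,1\}^m$ denotes the bundle (row) of player $i$. An affine maximizer is $f:\mathbb R^{n\times m}\to\Omega$ with $f(\theta)\in\arg\max_{A\in\Omega}\{c_A+\sum_iw_i\theta_i\cdot A_i\}$ for nonzero weights $w_i$ and reals $c_A$. Difference sets $Q_A=\mathrm{cl}\{\theta:f(\theta)=A\}$; indifference complex $\mathcal I(f)=\{\mathcal O\subseteq\Omega:\bigcap_{A\in\mathcal O}Q_A\ne\emptyset\}$. Let $\Psi_{(n,m)}$ be the set of indifference complexes of affine maximizers. With $\mathrm{Cd}(a,b)=\big||a|_1-|b|_1\big|$, define $\mu_c(n,m)=\min_{\mathcal I\in\Psi_{(n,m)}}\max\{\mathrm{Cd}(A_i,B_i): A,B\in F\text{ for some }F\in\mathcal I,\ i\in[n]\}$. *)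

theory Defs
  imports "HOL-Analysis.Analysis"
begin

text \<open>Players are 0..<n, items are 0..<m. Matrices are functions nat => nat => _,
  required to vanish outside [n] x [m]. Row i of a matrix is the bundle of player i.\<close>

type_synonym alloc = "nat \<Rightarrow> nat \<Rightarrow> nat"
type_synonym valuation = "nat \<Rightarrow> nat \<Rightarrow> real"

definition allocations :: "nat \<Rightarrow> nat \<Rightarrow> alloc set" where
  "allocations n m = {A. (\<forall>i j. A i j \<in> {0, 1})
       \<and> (\<forall>i j. \<not> (i < n \<and> j < m) \<longrightarrow> A i j = 0)
       \<and> (\<forall>j<m. (\<Sum>i<n. A i j) = 1)}"

definition valuations :: "nat \<Rightarrow> nat \<Rightarrow> valuation set" where
  "valuations n m = {\<theta>. \<forall>i j. \<not> (i < n \<and> j < m) \<longrightarrow> \<theta> i j = 0}"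

definition affine_maximizer :: "nat \<Rightarrow> nat \<Rightarrow> (valuation \<Rightarrow> alloc) \<Rightarrow> bool" where
  "affine_maximizer n m f \<longleftrightarrow>
     (\<exists>(w :: nat \<Rightarrow> real) (c :: alloc \<Rightarrow> real).
        (\<forall>i<n. w i \<noteq> 0) \<and>
        (\<forall>\<theta>\<in>valuations n m. f \<theta> \<in> allocations n m \<and>
           (\<forall>B\<in>allocations n m.
              c B + (\<Sum>i<n. w i * (\<Sum>j<m. \<theta> i j * real (B i j)))
              \<le> c (f \<theta>) + (\<Sum>i<n. w i * (\<Sum>j<m. \<theta> i j * real (f \<theta> i j))))))"

definition diff_set :: "nat \<Rightarrow> nat \<Rightarrow> (valuation \<Rightarrow> alloc) \<Rightarrow> alloc \<Rightarrow> valuation set" where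
  "diff_set n m f A = closure {\<theta> \<in> valuations n m. f \<theta> = A}"

definition indiff_complex :: "nat \<Rightarrow> nat \<Rightarrow> (valuation \<Rightarrow> alloc) \<Rightarrow> alloc set set" where
  "indiff_complex n m f =
     {S. S \<subseteq> allocations n m \<and> (\<Inter>A\<in>S. diff_set n m f A) \<noteq> {}}"

definition Psi :: "nat \<Rightarrow> nat \<Rightarrow> alloc set set set" where
  "Psi n m = {indiff_complex n m f | f. affine_maximizer n m f}"

definition Cd :: "nat \<Rightarrow> alloc \<Rightarrow> alloc \<Rightarrow> nat \<Rightarrow> nat" where
  "Cd m A B i = nat \<bar>int (\<Sum>j<m. A i j) - int (\<Sum>j<m. B i j)\<bar>"

definition complex_card_sens :: "nat \<Rightarrow> nat \<Rightarrow> alloc set set \<Rightarrow> nat" where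
  "complex_card_sens n m I =
     Sup {Cd m A B i | A B F i. F \<in> I \<and> A \<in> F \<and> B \<in> F \<and> i < n}"

definition mu_c :: "nat \<Rightarrow> nat \<Rightarrow> nat" where
  "mu_c n m = Inf (complex_card_sens n m ` Psi n m)"

end

theory Submission
  imports Defs
begin

definition alloc_of :: "nat \<Rightarrow> nat set \<Rightarrow> alloc" where
  "alloc_of m S = (\<lambda>i j. if i = 0 \<and> j < m \<and> j \<in> S then 1
                         else if i = 1 \<and> j < m \<and> j \<notin> S then 1 else 0)"

lemma alloc_of_in: "alloc_of m S \<in> allocations 2 m"
  unfolding allocations_def alloc_of_def
  by (auto simp: numeral_2_eq_2)

lemma alloc_eq:
  assumes "A \<in> allocations 2 m"
  shows "A = alloc_of m {j. j < m \<and> A 0 j = 1}"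
proof -
  have b: "\<And>i j. A i j \<in> {0,1}" and z: "\<And>i j. \<not> (i < 2 \<and> j < m) \<Longrightarrow> A i j = 0"
    and s: "\<And>j. j < m \<Longrightarrow> A 0 j + A 1 j = 1"
    using assms unfolding allocations_def by (auto simp: numeral_2_eq_2)
  show ?thesis
  proof (intro ext)
    fix i j
    show "A i j = alloc_of m {j. j < m \<and> A 0 j = 1} i j"
    proof (cases "i < 2 \<and> j < m")
      case True
      then have "i = 0 \<or> i = 1" by auto
      then show ?thesis using s[of j] b[of 0 j] b[of 1 j] True
        unfolding alloc_of_def by auto
    next
      case False
      then show ?thesis using z[of i j] unfolding alloc_of_def by auto
    qed
  qed
qed

lemma finite_alloc: "finite (allocations 2 m)"
proof -
  have "allocations 2 m \<subseteq> alloc_of m ` Pow {..<m}"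
  proof
    fix A assume "A \<in> allocations 2 m"
    then have "A = alloc_of m {j. j < m \<and> A 0 j = 1}" by (rule alloc_eq)
    then show "A \<in> alloc_of m ` Pow {..<m}" by blast
  qed
  then show ?thesis by (rule finite_subset) auto
qed

lemma size_alloc_of: "S \<subseteq> {..<m} \<Longrightarrow> (\<Sum>j<m. alloc_of m S 0 j) = card S"
proof -
  assume "S \<subseteq> {..<m}"
  have "(\<Sum>j<m. alloc_of m S 0 j) = (\<Sum>j<m. if j \<in> S then 1 else 0)"
    by (rule sum.cong) (auto simp: alloc_of_def)
  also have "\<dots> = card ({..<m} \<inter> S)" by (simp add: sum.If_cases)
  also have "{..<m} \<inter> S = S" using \<open>S \<subseteq> {..<m}\<close> by auto
  finally show ?thesis .
qed

lemma size1_alloc_of: "S \<subseteq> {..<m} \<Longrightarrow> (\<Sum>j<m. alloc_of m S 1 j) = m - card S"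
proof -
  assume "S \<subseteq> {..<m}"
  have "(\<Sum>j<m. alloc_of m S 1 j) = (\<Sum>j<m. if j \<in> S then 0 else 1)"
    by (rule sum.cong) (auto simp: alloc_of_def)
  also have "\<dots> = card ({..<m} - S)" by (simp add: sum.If_cases Diff_eq)
  also have "\<dots> = m - card S" using \<open>S \<subseteq> {..<m}\<close>
    by (simp add: card_Diff_subset finite_subset)
  finally show ?thesis .
qed

lemma size_le: "A \<in> allocations 2 m \<Longrightarrow> (\<Sum>j<m. A i j) \<le> m"
proof -
  assume "A \<in> allocations 2 m"
  then have "\<forall>i j. A i j \<in> {0,1}" unfolding allocations_def by blast
  then have "\<And>j. A i j \<le> 1" by (metis insert_iff le_numeral_extra(4) less_one nat_less_le singletonD)
  then have "(\<Sum>j<m. A i j) \<le> (\<Sum>j<m. (1::nat))" by (intro sum_mono) auto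
  then show ?thesis by simp
qed

lemma obj_line:
  fixes w :: "nat \<Rightarrow> real" and A :: alloc
  assumes "w 0 \<noteq> 0"
  shows "(\<Sum>i<2. w i * (\<Sum>j<m. (\<lambda>i j. if i = 0 \<and> j < m then t / w 0 else 0) i j * real (A i j)))
          = t * real (\<Sum>j<m. A 0 j)"
proof -
  have "(\<Sum>j<m. (if j < m then t / w 0 else 0) * real (A 0 j)) = (t / w 0) * real (\<Sum>j<m. A 0 j)"
    by (simp add: sum_distrib_left)
  then show ?thesis using assms by (simp add: numeral_2_eq_2)
qed

lemma natabs: "(a::nat) \<le> m \<Longrightarrow> b \<le> m \<Longrightarrow> nat \<bar>int a - int b\<bar> \<le> m" by arith

lemma natabs1: "(a::nat) \<noteq> b \<Longrightarrow> 1 \<le> nat \<bar>int a - int b\<bar>" by arith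

lemma Cd_le: "A \<in> allocations 2 m \<Longrightarrow> B \<in> allocations 2 m \<Longrightarrow> Cd m A B i \<le> m"
  unfolding Cd_def by (rule natabs[OF size_le size_le])

lemma sens_bdd: "bdd_above {Cd m A B i | A B F i. F \<in> indiff_complex 2 m f \<and> A \<in> F \<and> B \<in> F \<and> i < 2}"
  unfolding bdd_above_def indiff_complex_def
  by (rule exI[of _ m]) (auto intro!: Cd_le)

lemma lower:
  assumes "affine_maximizer 2 m f" and "m \<ge> 1"
  shows "1 \<le> complex_card_sens 2 m (indiff_complex 2 m f)"
proof -
  obtain w c where w: "\<forall>i<2. w i \<noteq> (0::real)" and
    opt: "\<forall>\<theta>\<in>valuations 2 m. f \<theta> \<in> allocations 2 m \<and>
           (\<forall>B\<in>allocations 2 m.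
              c B + (\<Sum>i<2. w i * (\<Sum>j<m. \<theta> i j * real (B i j)))
              \<le> c (f \<theta>) + (\<Sum>i<2. w i * (\<Sum>j<m. \<theta> i j * real (f \<theta> i j))))"
    using assms(1) unfolding affine_maximizer_def by blast
  have w0: "w 0 \<noteq> 0" using w by auto
  define sz where "sz A = (\<Sum>j<m. A 0 j)" for A :: alloc
  define \<phi> :: "real \<Rightarrow> valuation" where "\<phi> t = (\<lambda>i j. if i = 0 \<and> j < m then t / w 0 else (0::real))" for t
  define D where "D = 2 * (\<Sum>A\<in>allocations 2 m. \<bar>c A\<bar>) + 1"
  have cb: "\<bar>c A\<bar> \<le> (\<Sum>A\<in>allocations 2 m. \<bar>c A\<bar>)" if "A \<in> allocations 2 m" for A
    by (rule member_le_sum) (use that finite_alloc in auto)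
  have cdiff: "c A - c B < D" if "A \<in> allocations 2 m" "B \<in> allocations 2 m" for A B
    using cb[OF that(1)] cb[OF that(2)] unfolding D_def by linarith
  have "0 \<le> (\<Sum>A\<in>allocations 2 m. \<bar>c A\<bar>)" by (rule sum_nonneg) simp
  then have Dpos: "D > 0" unfolding D_def by linarith
  have phival: "\<phi> t \<in> valuations 2 m" for t unfolding valuations_def \<phi>_def by auto
  have opt2: "f (\<phi> t) \<in> allocations 2 m \<and> (\<forall>B\<in>allocations 2 m.
       c B + t * real (sz B) \<le> c (f (\<phi> t)) + t * real (sz (f (\<phi> t))))" for t
  proof -
    have eq: "(\<Sum>i<2. w i * (\<Sum>j<m. \<phi> t i j * real (A i j))) = t * real (sz A)" for A
      unfolding \<phi>_def sz_def by (rule obj_line[of w, OF w0])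
    have "f (\<phi> t) \<in> allocations 2 m \<and>
           (\<forall>B\<in>allocations 2 m.
              c B + (\<Sum>i<2. w i * (\<Sum>j<m. \<phi> t i j * real (B i j)))
              \<le> c (f (\<phi> t)) + (\<Sum>i<2. w i * (\<Sum>j<m. \<phi> t i j * real (f (\<phi> t) i j))))"
      using opt phival[of t] by blast
    then show ?thesis unfolding eq .
  qed
  have fullin: "alloc_of m {..<m} \<in> allocations 2 m" by (rule alloc_of_in)
  have szfull: "sz (alloc_of m {..<m}) = m" unfolding sz_def using size_alloc_of[of "{..<m}" m] by simp
  have emptyin: "alloc_of m {} \<in> allocations 2 m" by (rule alloc_of_in)
  have szempty: "sz (alloc_of m {}) = 0" unfolding sz_def using size_alloc_of[of "{}" m] by simp
  have szle: "sz A \<le> m" if "A \<in> allocations 2 m" for A unfolding sz_def using size_le[OF that] .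
  have top: "sz (f (\<phi> D)) = m"
  proof (rule ccontr)
    assume ne: "sz (f (\<phi> D)) \<noteq> m"
    let ?A = "f (\<phi> D)"
    have Ain: "?A \<in> allocations 2 m" using opt2 by blast
    have "c (alloc_of m {..<m}) + D * real m \<le> c ?A + D * real (sz ?A)"
      using opt2[of D] fullin szfull by metis
    moreover have "real (sz ?A) + 1 \<le> real m" using ne szle[OF Ain] by linarith
    moreover have "D * (real (sz ?A) + 1) \<le> D * real m" using calculation(2) Dpos by simp
    ultimately have "D \<le> c ?A - c (alloc_of m {..<m})" by (simp add: algebra_simps)
    with cdiff[OF Ain fullin] show False by linarith
  qed
  have bot: "sz (f (\<phi> (-D))) \<noteq> m"
  proof
    assume e: "sz (f (\<phi> (-D))) = m"
    let ?A = "f (\<phi> (-D))"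
    have Ain: "?A \<in> allocations 2 m" using opt2 by blast
    have "c (alloc_of m {}) + (-D) * 0 \<le> c ?A + (-D) * real (sz ?A)"
      using opt2[of "-D"] emptyin szempty by (metis of_nat_0)
    moreover have "D * 1 \<le> D * real m" using assms(2) Dpos by simp
    ultimately have "D \<le> c ?A - c (alloc_of m {})" using e by (simp add: algebra_simps)
    with cdiff[OF Ain emptyin] show False by linarith
  qed
  define E1 where "E1 = (\<Union>A\<in>{A\<in>allocations 2 m. sz A = m}. diff_set 2 m f A)"
  define E2 where "E2 = (\<Union>A\<in>{A\<in>allocations 2 m. sz A \<noteq> m}. diff_set 2 m f A)"
  define S where "S = \<phi> ` {-D..D}"
  have contphi: "continuous_on UNIV \<phi>"
    unfolding \<phi>_def
  proof (intro continuous_on_coordinatewise_then_product)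
    fix i j show "continuous_on UNIV (\<lambda>x. if i = 0 \<and> j < m then x / w 0 else 0)"
      by (cases "i = 0 \<and> j < m") (auto intro!: continuous_intros simp: w0)
  qed
  have inQ: "\<theta> \<in> diff_set 2 m f (f \<theta>)" if "\<theta> \<in> valuations 2 m" for \<theta>
  proof -
    have "\<theta> \<in> {\<theta>' \<in> valuations 2 m. f \<theta>' = f \<theta>}" using that by simp
    then show ?thesis unfolding diff_set_def by (rule closure_subset[THEN subsetD])
  qed
  have "connected S" unfolding S_def
    by (rule connected_continuous_image) (auto intro: continuous_on_subset[OF contphi])
  moreover have "closed E1" unfolding E1_def diff_set_def
    by (rule closed_UN) (auto intro: finite_subset[OF _ finite_alloc])
  moreover have "closed E2" unfolding E2_def diff_set_def
    by (rule closed_UN) (auto intro: finite_subset[OF _ finite_alloc])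
  moreover have "S \<subseteq> E1 \<union> E2"
  proof
    fix \<theta> assume "\<theta> \<in> S"
    then obtain t where t: "\<theta> = \<phi> t" unfolding S_def by auto
    have Q: "\<theta> \<in> diff_set 2 m f (f \<theta>)" using inQ phival t by simp
    have fa: "f \<theta> \<in> allocations 2 m" using opt2 t by simp
    show "\<theta> \<in> E1 \<union> E2"
    proof (cases "sz (f \<theta>) = m")
      case True
      then have "\<theta> \<in> E1" unfolding E1_def using Q fa by (intro UN_I[of "f \<theta>"]) auto
      then show ?thesis by simp
    next
      case False
      then have "\<theta> \<in> E2" unfolding E2_def using Q fa by (intro UN_I[of "f \<theta>"]) auto
      then show ?thesis by simp
    qed
  qed
  moreover have "E1 \<inter> S \<noteq> {}"
  proof -
    have "\<phi> D \<in> S" unfolding S_def using Dpos by auto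
    moreover have "\<phi> D \<in> E1" unfolding E1_def
      using inQ[OF phival[of D]] top opt2[of D] by (intro UN_I[of "f (\<phi> D)"]) auto
    ultimately show ?thesis by blast
  qed
  moreover have "E2 \<inter> S \<noteq> {}"
  proof -
    have "\<phi> (-D) \<in> S" unfolding S_def using Dpos by auto
    moreover have "\<phi> (-D) \<in> E2" unfolding E2_def
      using inQ[OF phival[of "-D"]] bot opt2[of "-D"] by (intro UN_I[of "f (\<phi> (-D))"]) auto
    ultimately show ?thesis by blast
  qed
  ultimately have "E1 \<inter> E2 \<inter> S \<noteq> {}" unfolding connected_closed by (metis (no_types, lifting))
  then obtain \<theta> A B where A: "A \<in> allocations 2 m" "sz A = m" "\<theta> \<in> diff_set 2 m f A"
    and B: "B \<in> allocations 2 m" "sz B \<noteq> m" "\<theta> \<in> diff_set 2 m f B"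
    unfolding E1_def E2_def by blast
  have F: "{A, B} \<in> indiff_complex 2 m f"
    unfolding indiff_complex_def using A B by auto
  have "1 \<le> Cd m A B 0"
    unfolding Cd_def using A(2) B(2) unfolding sz_def by (intro natabs1) simp
  also have "Cd m A B 0 \<le> complex_card_sens 2 m (indiff_complex 2 m f)"
    unfolding complex_card_sens_def
    by (rule cSup_upper[OF _ sens_bdd]) (use F in \<open>intro CollectI exI[of _ A] exI[of _ B] exI[of _ "{A,B}"] exI[of _ 0], auto\<close>)
  finally show ?thesis .
qed


definition lin :: "nat \<Rightarrow> valuation \<Rightarrow> nat set \<Rightarrow> real" where
  "lin m \<theta> S = (\<Sum>j<m. if j \<in> S then \<theta> 0 j else \<theta> 1 j)"

definition obj :: "nat \<Rightarrow> valuation \<Rightarrow> alloc \<Rightarrow> real" where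
  "obj m \<theta> B = - (real (\<Sum>j<m. B 0 j))\<^sup>2 + (\<Sum>i<2. (\<lambda>_. 1::real) i * (\<Sum>j<m. \<theta> i j * real (B i j)))"

lemma obj_alloc_of:
  assumes "S \<subseteq> {..<m}"
  shows "obj m \<theta> (alloc_of m S) = - (real (card S))\<^sup>2 + lin m \<theta> S"
proof -
  have "(\<Sum>i<2. (\<lambda>_. 1::real) i * (\<Sum>j<m. \<theta> i j * real (alloc_of m S i j)))
        = (\<Sum>j<m. \<theta> 0 j * real (alloc_of m S 0 j) + \<theta> 1 j * real (alloc_of m S 1 j))"
    by (simp add: numeral_2_eq_2 sum.distrib)
  also have "\<dots> = lin m \<theta> S" unfolding lin_def
    by (rule sum.cong) (auto simp: alloc_of_def)
  finally show ?thesis unfolding obj_def using size_alloc_of[OF assms] by simp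
qed

lemma lin_exchange:
  assumes "j < m" "j \<notin> S" "j \<in> T"
  shows "lin m \<theta> (insert j S) + lin m \<theta> (T - {j}) = lin m \<theta> S + lin m \<theta> T"
proof -
  have jm: "j \<in> {..<m}" using assms by simp
  have r: "lin m \<theta> U = (if j \<in> U then \<theta> 0 j else \<theta> 1 j) +
     (\<Sum>k\<in>{..<m} - {j}. if k \<in> U then \<theta> 0 k else \<theta> 1 k)" for U
    unfolding lin_def by (rule sum.remove[OF _ jm]) simp
  have e1: "(\<Sum>k\<in>{..<m} - {j}. if k \<in> insert j S then \<theta> 0 k else \<theta> 1 k)
          = (\<Sum>k\<in>{..<m} - {j}. if k \<in> S then \<theta> 0 k else \<theta> 1 k)"
    by (rule sum.cong) auto
  have e2: "(\<Sum>k\<in>{..<m} - {j}. if k \<in> T - {j} then \<theta> 0 k else \<theta> 1 k)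
          = (\<Sum>k\<in>{..<m} - {j}. if k \<in> T then \<theta> 0 k else \<theta> 1 k)"
    by (rule sum.cong) auto
  show ?thesis using assms by (simp add: r[of "insert j S"] r[of "T - {j}"] r[of S] r[of T] e1 e2)
qed

lemma exchange:
  assumes S: "S \<subseteq> {..<m}" and T: "T \<subseteq> {..<m}"
    and optS: "\<forall>B\<in>allocations 2 m. obj m \<theta> B \<le> obj m \<theta> (alloc_of m S)"
    and optT: "\<forall>B\<in>allocations 2 m. obj m \<theta> B \<le> obj m \<theta> (alloc_of m T)"
  shows "card T \<le> card S + 1"
proof (rule ccontr)
  assume "\<not> card T \<le> card S + 1"
  then have lt: "card S + 2 \<le> card T" by simp
  have fS: "finite S" "finite T" using finite_subset[OF S] finite_subset[OF T] by auto
  have "\<not> T \<subseteq> S"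
  proof
    assume "T \<subseteq> S" then have "card T \<le> card S" by (rule card_mono[OF fS(1)])
    then show False using lt by linarith
  qed
  then obtain j where j: "j \<in> T" "j \<notin> S" by blast
  have jm: "j < m" using j T by auto
  have c1: "card (insert j S) = card S + 1" using fS j by simp
  have c2: "card (T - {j}) = card T - 1" using fS j by simp
  have s1: "insert j S \<subseteq> {..<m}" using S jm by auto
  have s2: "T - {j} \<subseteq> {..<m}" using T by auto
  have i1: "obj m \<theta> (alloc_of m (insert j S)) \<le> obj m \<theta> (alloc_of m S)"
    using optS alloc_of_in by blast
  have i2: "obj m \<theta> (alloc_of m (T - {j})) \<le> obj m \<theta> (alloc_of m T)"
    using optT alloc_of_in by blast
  define k where "k = real (card S)"
  define l where "l = real (card T)"
  have kl: "k + 2 \<le> l" using lt unfolding k_def l_def by linarith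
  have c2': "real (card (T - {j})) = l - 1" using c2 lt unfolding l_def by simp
  have c1': "real (card (insert j S)) = k + 1" using c1 unfolding k_def by simp
  have "- (k+1)\<^sup>2 + lin m \<theta> (insert j S) + (- (l-1)\<^sup>2 + lin m \<theta> (T - {j}))
        \<le> - k\<^sup>2 + lin m \<theta> S + (- l\<^sup>2 + lin m \<theta> T)"
    using i1 i2 unfolding obj_alloc_of[OF s1] obj_alloc_of[OF s2] obj_alloc_of[OF S] obj_alloc_of[OF T]
    c1' c2' k_def[symmetric] l_def[symmetric] by linarith
  then have "- (k+1)\<^sup>2 - (l-1)\<^sup>2 \<le> - k\<^sup>2 - l\<^sup>2"
    using lin_exchange[OF jm j(2) j(1), of \<theta>] by linarith
  then show False using kl by (simp add: power2_eq_square algebra_simps)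
qed


lemma exists_max:
  fixes g :: "'a \<Rightarrow> real"
  assumes "finite S" "S \<noteq> {}"
  shows "\<exists>x\<in>S. \<forall>y\<in>S. g y \<le> g x"
proof -
  have "Max (g ` S) \<in> g ` S" using assms by simp
  then obtain x where x: "x \<in> S" "g x = Max (g ` S)" by auto
  have "\<forall>y\<in>S. g y \<le> g x" using x assms by simp
  then show ?thesis using x by blast
qed

definition fopt :: "nat \<Rightarrow> valuation \<Rightarrow> alloc" where
  "fopt m \<theta> = (SOME A. A \<in> allocations 2 m \<and> (\<forall>B\<in>allocations 2 m. obj m \<theta> B \<le> obj m \<theta> A))"

lemma fopt_spec: "fopt m \<theta> \<in> allocations 2 m \<and> (\<forall>B\<in>allocations 2 m. obj m \<theta> B \<le> obj m \<theta> (fopt m \<theta>))"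
proof -
  have "allocations 2 m \<noteq> {}" using alloc_of_in by blast
  then have "\<exists>A\<in>allocations 2 m. \<forall>B\<in>allocations 2 m. obj m \<theta> B \<le> obj m \<theta> A"
    by (rule exists_max[OF finite_alloc])
  then show ?thesis unfolding fopt_def by (rule someI_ex[where P = "\<lambda>A. A \<in> allocations 2 m \<and> (\<forall>B\<in>allocations 2 m. obj m \<theta> B \<le> obj m \<theta> A)", OF bexE]) blast+
qed

lemma fopt_am: "affine_maximizer 2 m (fopt m)"
  unfolding affine_maximizer_def
  apply (rule exI[of _ "\<lambda>_. 1"], rule exI[of _ "\<lambda>B. - (real (\<Sum>j<m. B 0 j))\<^sup>2"])
  using fopt_spec[of m] unfolding obj_def by auto

lemma coord_cont: "continuous_on UNIV (\<lambda>\<theta>::valuation. \<theta> i j)"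
  by (rule continuous_on_product_then_coordinatewise[OF continuous_on_product_coordinates])

lemma obj_cont: "continuous_on UNIV (\<lambda>\<theta>. obj m \<theta> B)"
  unfolding obj_def by (intro continuous_intros coord_cont)

lemma closure_opt:
  assumes "\<theta> \<in> diff_set 2 m (fopt m) A" "B \<in> allocations 2 m"
  shows "obj m \<theta> B \<le> obj m \<theta> A"
proof -
  have "{\<theta> \<in> valuations 2 m. fopt m \<theta> = A} \<subseteq> {\<theta>. obj m \<theta> B \<le> obj m \<theta> A}"
    using fopt_spec assms(2) by blast
  moreover have "closed {\<theta>. obj m \<theta> B \<le> obj m \<theta> A}"
    by (rule closed_Collect_le[OF obj_cont obj_cont])
  ultimately have "diff_set 2 m (fopt m) A \<subseteq> {\<theta>. obj m \<theta> B \<le> obj m \<theta> A}"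
    unfolding diff_set_def by (rule closure_minimal)
  then show ?thesis using assms(1) by blast
qed

lemma card_le_m: "card {j. j < m \<and> P j} \<le> m"
proof -
  have "card {j. j < m \<and> P j} \<le> card {..<m}" by (rule card_mono) auto
  then show ?thesis by simp
qed

lemma pair_bound:
  assumes A: "A \<in> allocations 2 m" and B: "B \<in> allocations 2 m"
    and oA: "\<forall>C\<in>allocations 2 m. obj m \<theta> C \<le> obj m \<theta> A"
    and oB: "\<forall>C\<in>allocations 2 m. obj m \<theta> C \<le> obj m \<theta> B"
    and i: "i < 2"
  shows "Cd m A B i \<le> 1"
proof -
  define SA where "SA = {j. j < m \<and> A 0 j = 1}"
  define SB where "SB = {j. j < m \<and> B 0 j = 1}"
  have eA: "A = alloc_of m SA" unfolding SA_def by (rule alloc_eq[OF A])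
  have eB: "B = alloc_of m SB" unfolding SB_def by (rule alloc_eq[OF B])
  have sA: "SA \<subseteq> {..<m}" and sB: "SB \<subseteq> {..<m}" unfolding SA_def SB_def by auto
  have kA: "card SA \<le> m" and kB: "card SB \<le> m" unfolding SA_def SB_def by (rule card_le_m)+
  have oA': "\<forall>C\<in>allocations 2 m. obj m \<theta> C \<le> obj m \<theta> (alloc_of m SA)" using oA eA by simp
  have oB': "\<forall>C\<in>allocations 2 m. obj m \<theta> C \<le> obj m \<theta> (alloc_of m SB)" using oB eB by simp
  have x1: "card SB \<le> card SA + 1" by (rule exchange[OF sA sB oA' oB'])
  have x2: "card SA \<le> card SB + 1" by (rule exchange[OF sB sA oB' oA'])
  have "i = 0 \<or> i = 1" using i by auto
  then show ?thesis
  proof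
    assume "i = 0"
    then show ?thesis unfolding Cd_def eA eB
      using size_alloc_of[OF sA] size_alloc_of[OF sB] x1 x2
      by (simp only: of_nat_sum[symmetric]; arith)
  next
    assume "i = 1"
    then show ?thesis unfolding Cd_def eA eB
      using size1_alloc_of[OF sA] size1_alloc_of[OF sB] x1 x2 kA kB
      by (simp only: of_nat_sum[symmetric]; arith)
  qed
qed

lemma upper: "complex_card_sens 2 m (indiff_complex 2 m (fopt m)) \<le> 1"
proof -
  define X where "X = {Cd m A B i | A B F i. F \<in> indiff_complex 2 m (fopt m) \<and> A \<in> F \<and> B \<in> F \<and> i < 2}"
  have "\<forall>x\<in>X. x \<le> 1"
  proof
    fix x assume "x \<in> X"
    then obtain A B F i where x: "x = Cd m A B i" and F: "F \<in> indiff_complex 2 m (fopt m)"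
      and AB: "A \<in> F" "B \<in> F" and i: "i < 2" unfolding X_def by blast
    from F have Fs: "F \<subseteq> allocations 2 m" and ne: "(\<Inter>A\<in>F. diff_set 2 m (fopt m) A) \<noteq> {}"
      unfolding indiff_complex_def by auto
    then obtain \<theta> where th: "\<And>C. C \<in> F \<Longrightarrow> \<theta> \<in> diff_set 2 m (fopt m) C" by blast
    show "x \<le> 1" unfolding x
      by (rule pair_bound) (use Fs AB th closure_opt i in blast)+
  qed
  then have "Sup X \<le> 1"
    by (cases "X = {}") (auto intro: cSup_least)
  then show ?thesis unfolding complex_card_sens_def X_def .
qed

theorem mainTheorem9:
  fixes m :: nat
  assumes "m \<ge> 1"
  shows "mu_c 2 m = 1"
  unfolding mu_c_def
proof (rule cInf_eq_minimum)
  have "indiff_complex 2 m (fopt m) \<in> Psi 2 m" unfolding Psi_def using fopt_am by blast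
  moreover have "complex_card_sens 2 m (indiff_complex 2 m (fopt m)) = 1"
    using upper lower[OF fopt_am assms] by (rule antisym)
  ultimately show "1 \<in> complex_card_sens 2 m ` Psi 2 m" by (metis image_eqI)
next
  fix x assume "x \<in> complex_card_sens 2 m ` Psi 2 m"
  then obtain f where "affine_maximizer 2 m f" "x = complex_card_sens 2 m (indiff_complex 2 m f)"
    unfolding Psi_def by blast
  then show "1 \<le> x" using lower assms by simp
qed

end
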